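(* Let $\mathcal{M}=\{1,\dots,M\}$ be masters and $\mathcal{N}=\{1,\dots,N\}$ workers, $N>M$, with parameters $L_m>0$, $u_{m,n}>0$, $a_{m,n}>0$. For $k_{m,n}\in\{0,1\}$ and $l_{m,n}\ge 0$ define $$\mathbb{E}[X_m(t)]=\sum_{n=1}^N \mathbb{E}[X_{m,n}(t)],\qquad \mathbb{E}[X_{m,n}(t)]=\begin{cases}k_{m,n}l_{m,n}\left[1-e^{-\frac{u_{m,n}}{l_{m,n}}(t-a_{m,n}l_{m,n})}\right], & k_{m,n}>0,\ t\ge a_{m,n}l_{m,n},\\ 0,&\text{otherwise}.\end{cases}$$ Consider the dedicated worker-assignment problem $$\mathcal{P}2:\ \min_{\{l_{m,n},k_{m,n},t\}} t\quad\text{s.t.}\quad L_m-\mathbb{E}[X_m(t)]\le 0\ \forall m,\quad \sum_{m=1}^M k_{m,n}\le 1\ \forall n,\quad k_{m,n}\in\{0,1\},\ l_{m,n}\ge 0\ \forall m,n.$$ Let $\phi_{m,n}=\frac{1}{u_{m,n}}\left[-\mathcal{W}_{-1}(-e^{-u_{m,n}a_{m,n}-1})-1\right]$, where $\mathcal{W}_{-1}$ is the lower branch of the Lambert W function, and $v_{m,n}=\frac{u_{m,n}}{L_m(1+u_{m,n}\phi_{m,n})}$. Then $\mathcal{P}2$ is equivalent to the max-min allocation problem $$\mathcal{P}5:\ \max_{\{k_{m,n}\}}\ \min_{m\in\mathcal{M}}\sum_{n=1}^N k_{m,n}v_{m,n}\quad\text{s.t.}\quad \sum_{m=1}^M k_{m,n}\le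 1,\ k_{m,n}\in\{0,1\}\ \forall m,n,$$ in the sense that minimizing over loads for each fixed assignment, the minimum value of $t$ for the assignment $\{k_{m,n}\}$ equals $1/\min_{m}\sum_n k_{m,n}v_{m,n}$; hence an assignment is optimal for $\mathcal{P}2$ iff it is optimal for $\mathcal{P}5$, and the optimal value of $\mathcal{P}2$ is the reciprocal of that of $\mathcal{P}5$.
   Context: Each master $m$ has a matrix-vector multiplication task with $L_m$ rows, MDS-coded; worker $n$ is dedicated to at most one master ($k_{m,n}=1$ iff worker $n$ serves master $m$) and computes $l_{m,n}$ coded rows; the processing time of worker $n$ on $l$ rows for master $m$ is shifted exponential with $\mathbb{P}[T\le t]=1-e^{-\frac{u_{m,n}}{l}(t-a_{m,n}l)}$ for $t\ge a_{m,n}l$. A master receives either all $l_{m,n}$ results of worker $n$ or none by time $t$; $X_m(t)$ is the number of results master $m$ has by time $t$. *)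

theory Defs
  imports "HOL-Analysis.Analysis"
begin

definition lambertW_m1 :: "real \<Rightarrow> real" where
  "lambertW_m1 x = (THE w. w \<le> -1 \<and> w * exp w = x)"

definition EXmn :: "real \<Rightarrow> real \<Rightarrow> real \<Rightarrow> real \<Rightarrow> real \<Rightarrow> real" where
  "EXmn u a k l t =
     (if k > 0 \<and> t \<ge> a * l then k * l * (1 - exp (- (u / l) * (t - a * l))) else 0)"

definition EXm :: "nat \<Rightarrow> (nat \<Rightarrow> nat \<Rightarrow> real) \<Rightarrow> (nat \<Rightarrow> nat \<Rightarrow> real)
     \<Rightarrow> (nat \<Rightarrow> nat \<Rightarrow> real) \<Rightarrow> (nat \<Rightarrow> nat \<Rightarrow> real) \<Rightarrow> nat \<Rightarrow> real \<Rightarrow> real" where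
  "EXm N u a k l m t = (\<Sum>n = 1..N. EXmn (u m n) (a m n) (k m n) (l m n) t)"

definition valid_assign :: "nat \<Rightarrow> nat \<Rightarrow> (nat \<Rightarrow> nat \<Rightarrow> real) \<Rightarrow> bool" where
  "valid_assign M N k \<longleftrightarrow>
     (\<forall>m\<in>{1..M}. \<forall>n\<in>{1..N}. k m n \<in> {0, 1}) \<and> (\<forall>n\<in>{1..N}. (\<Sum>m = 1..M. k m n) \<le> 1)"

definition P2_feasible :: "nat \<Rightarrow> nat \<Rightarrow> (nat \<Rightarrow> real) \<Rightarrow> (nat \<Rightarrow> nat \<Rightarrow> real) \<Rightarrow> (nat \<Rightarrow> nat \<Rightarrow> real)
     \<Rightarrow> (nat \<Rightarrow> nat \<Rightarrow> real) \<Rightarrow> (nat \<Rightarrow> nat \<Rightarrow> real) \<Rightarrow> real \<Rightarrow> bool" where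
  "P2_feasible M N L u a k l t \<longleftrightarrow>
     valid_assign M N k \<and> (\<forall>m\<in>{1..M}. \<forall>n\<in>{1..N}. l m n \<ge> 0) \<and>
     (\<forall>m\<in>{1..M}. L m - EXm N u a k l m t \<le> 0)"

definition P2_optimal :: "nat \<Rightarrow> nat \<Rightarrow> (nat \<Rightarrow> real) \<Rightarrow> (nat \<Rightarrow> nat \<Rightarrow> real) \<Rightarrow> (nat \<Rightarrow> nat \<Rightarrow> real)
     \<Rightarrow> (nat \<Rightarrow> nat \<Rightarrow> real) \<Rightarrow> (nat \<Rightarrow> nat \<Rightarrow> real) \<Rightarrow> real \<Rightarrow> bool" where
  "P2_optimal M N L u a k l t \<longleftrightarrow>
     P2_feasible M N L u a k l t \<and> (\<forall>k' l' t'. P2_feasible M N L u a k' l' t' \<longrightarrow> t \<le> t')"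

definition phi :: "real \<Rightarrow> real \<Rightarrow> real" where
  "phi u a = (1 / u) * (- lambertW_m1 (- exp (- u * a - 1)) - 1)"

definition vv :: "(nat \<Rightarrow> real) \<Rightarrow> (nat \<Rightarrow> nat \<Rightarrow> real) \<Rightarrow> (nat \<Rightarrow> nat \<Rightarrow> real) \<Rightarrow> nat \<Rightarrow> nat \<Rightarrow> real" where
  "vv L u a m n = u m n / (L m * (1 + u m n * phi (u m n) (a m n)))"

definition P5_obj :: "nat \<Rightarrow> nat \<Rightarrow> (nat \<Rightarrow> nat \<Rightarrow> real) \<Rightarrow> (nat \<Rightarrow> nat \<Rightarrow> real) \<Rightarrow> real" where
  "P5_obj M N v k = Min ((\<lambda>m. \<Sum>n = 1..N. k m n * v m n) ` {1..M})"

definition P5_optimal :: "nat \<Rightarrow> nat \<Rightarrow> (nat \<Rightarrow> nat \<Rightarrow> real) \<Rightarrow> (nat \<Rightarrow> nat \<Rightarrow> real) \<Rightarrow> bool" where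
  "P5_optimal M N v k \<longleftrightarrow>
     valid_assign M N k \<and> (\<forall>k'. valid_assign M N k' \<longrightarrow> P5_obj M N v k' \<le> P5_obj M N v k)"

end

theory Submission
  imports Defs
begin

lemma exp_strict: fixes d :: real assumes "d > 0" shows "1 + d < exp d"
proof -
  have "exp d = exp (d/2) * exp (d/2)" by (simp flip: exp_add)
  also have "... \<ge> (1 + d/2) * (1 + d/2)"
    by (rule mult_mono) (use exp_ge_add_one_self[of "d/2"] assms in auto)
  finally have h: "(1 + d/2) * (1 + d/2) \<le> exp d" .
  have "(1 + d/2) * (1 + d/2) = 1 + d + d*d/4" by (simp add: algebra_simps)
  moreover have "d * d > 0" using assms by simp
  ultimately show ?thesis using h by linarith
qed

lemma we_mono: fixes w1 w2 :: real assumes "w1 < w2" "w2 \<le> -1"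
  shows "w2 * exp w2 < w1 * exp w1"
proof -
  define d where "d = w2 - w1"
  define c where "c = - w2"
  have d: "d > 0" "c \<ge> 1" using assms by (auto simp: d_def c_def)
  have "c + d < c * exp d"
  proof -
    have "c * (1 + d) < c * exp d" using exp_strict[OF d(1)] d by simp
    moreover have "c * (1 + d) = c + c * d" by (simp add: algebra_simps)
    moreover have "1 * d \<le> c * d" using d by (intro mult_right_mono) auto
    ultimately show ?thesis by linarith
  qed
  hence A: "(c + d) * exp w1 < (c * exp d) * exp w1" by simp
  have E: "exp d * exp w1 = exp w2" by (simp add: d_def flip: exp_add)
  have B: "(c * exp d) * exp w1 = c * exp w2" using E by (simp add: mult.assoc)
  have h1: "(c + d) * exp w1 < c * exp w2" using A B by linarith
  have e1: "w1 * exp w1 = - ((c + d) * exp w1)" and e2: "w2 * exp w2 = - (c * exp w2)" by (simp_all add: c_def d_def)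
  show ?thesis using h1 e1 e2 by linarith
qed

lemma lw_props: fixes s :: real assumes "s > 1"
  shows "lambertW_m1 (- exp (- s)) \<le> -1 \<and> lambertW_m1 (- exp (- s)) * exp (lambertW_m1 (- exp (- s))) = - exp (- s)"
proof -
  let ?x = "- exp (- s)"
  define b where "b = -2 * s"
  have "2 * s \<le> exp s"
  proof -
    have "exp s = exp (s/2) * exp (s/2)" by (simp flip: exp_add)
    also have "... \<ge> (1 + s/2) * (1 + s/2)"
      by (rule mult_mono) (use exp_ge_add_one_self[of "s/2"] assms in auto)
    finally have h: "(1 + s/2) * (1 + s/2) \<le> exp s" .
    have "(1 + s/2) * (1 + s/2) = 2 * s + (1 - s/2) * (1 - s/2)" by (simp add: algebra_simps)
    moreover have "(1 - s/2) * (1 - s/2) \<ge> 0" by simp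
    ultimately show ?thesis using h by linarith
  qed
  hence "2 * s * exp b \<le> exp s * exp b" by simp
  also have "exp s * exp b = exp (-s)" by (simp add: b_def flip: exp_add)
  finally have fb: "?x \<le> b * exp b" by (simp add: b_def)
  have f1: "(-1) * exp (-1) \<le> ?x" using assms by simp
  have ex: "\<exists>w. b \<le> w \<and> w \<le> -1 \<and> w * exp w = ?x"
    using IVT2[of "\<lambda>w. w * exp w" "-1" ?x b] f1 fb assms
    by (auto simp: b_def intro!: continuous_intros)
  then obtain w where w: "w \<le> -1" "w * exp w = ?x" by blast
  have "lambertW_m1 ?x = w" unfolding lambertW_m1_def
  proof (rule the_equality)
    show "w \<le> -1 \<and> w * exp w = ?x" using w by simp
    fix w' assume h: "w' \<le> -1 \<and> w' * exp w' = ?x"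
    show "w' = w"
    proof (rule ccontr)
      assume "w' \<noteq> w"
      hence "w' < w \<or> w < w'" by auto
      thus False using we_mono[of w' w] we_mono[of w w'] h w by auto
    qed
  qed
  thus ?thesis using w by simp
qed

lemma phi_props: fixes u a :: real assumes "u > 0" "a > 0"
  shows "phi u a > a" "1 + u * phi u a > 0" "exp (u*a - u * phi u a) * (1 + u * phi u a) = 1"
proof -
  define s where "s = u * a + 1"
  have s1: "s > 1" using assms by (simp add: s_def)
  define w where "w = lambertW_m1 (- exp (- s))"
  have w: "w \<le> -1" "w * exp w = - exp (- s)" using lw_props[OF s1] by (auto simp: w_def)
  have "- u * a - 1 = - s" by (simp add: s_def)
  hence ph: "u * phi u a = - w - 1" using assms
    by (simp add: phi_def w_def)
  show "1 + u * phi u a > 0" using ph w by simp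
  have "exp (u*a - u * phi u a) * (1 + u * phi u a) = exp (s + w) * (- w)"
    using ph by (simp add: s_def algebra_simps)
  also have "... = exp s * (-(w * exp w))" by (simp add: exp_add)
  also have "... = 1" using w by (simp flip: exp_add)
  finally show e: "exp (u*a - u * phi u a) * (1 + u * phi u a) = 1" .
  have "-s * exp (-s) < w * exp w" using w s1 by (simp add: mult_less_cancel_right1)
  hence "w < -s" using we_mono[of "-s" w] we_mono[of w "-s"] w s1 by (cases "w < -s"; cases "w = -s") auto
  hence "u * phi u a > u * a" using ph s_def by simp
  thus "phi u a > a" using assms by simp
qed


lemma EXmn_bound: fixes u a k l t :: real
  assumes "u > 0" "a > 0" "k \<in> {0,1}" "l \<ge> 0"
  shows "EXmn u a k l t \<le> k * max t 0 * (u / (1 + u * phi u a))"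
proof -
  define p where "p = phi u a"
  have p: "p > a" "1 + u * p > 0" "exp (u*a - u*p) * (1 + u*p) = 1"
    using phi_props[OF assms(1,2)] by (auto simp: p_def)
  have G: "u / (1 + u * p) > 0" using p assms by simp
  show ?thesis
  proof (cases "k > 0 \<and> t \<ge> a * l")
    case False
    have "EXmn u a k l t = 0" unfolding EXmn_def by (rule if_not_P[OF False])
    have k0: "k \<ge> 0" using assms(3) by auto
    have G': "u / (1 + u * phi u a) > 0" using G by (simp add: p_def)
    have "0 \<le> k * max t 0 * (u / (1 + u * phi u a))"
      using k0 G' by (intro mult_nonneg_nonneg) auto
    thus ?thesis using `EXmn u a k l t = 0` by simp
  next
    case True
    hence k1: "k = 1" using assms by auto
    show ?thesis
    proof (cases "l = 0")
      case True
      have "EXmn u a k l t = 0" using True by (simp add: EXmn_def)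
      have G': "u / (1 + u * phi u a) > 0" using G by (simp add: p_def)
      have "0 \<le> k * max t 0 * (u / (1 + u * phi u a))"
        using k1 G' by (intro mult_nonneg_nonneg) auto
      thus ?thesis using `EXmn u a k l t = 0` by simp
    next
      case False
      hence l0: "l > 0" using assms by simp
      have "a * l > 0" using l0 assms(2) by simp
      hence t0: "t > 0" using True by linarith
      define y where "y = t / l"
      have ty: "t = l * y" using l0 by (simp add: y_def)
      have y0: "y > 0" using t0 l0 by (simp add: y_def)
      have ex: "- (u / l) * (t - a * l) = u*a - u*y" using l0 by (simp add: ty field_simps)
      have "exp (u*a - u*y) = exp (u*a - u*p) * exp (u*p - u*y)" by (simp flip: exp_add)
      also have "... \<ge> exp (u*a - u*p) * (1 + (u*p - u*y))"
        by (rule mult_left_mono) auto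
      finally have e0: "exp (u*a - u*y) \<ge> exp (u*a - u*p) * (1 + (u*p - u*y))" .
      have "exp (u*a - u*y) * (1 + u*p) \<ge> exp (u*a - u*p) * (1 + (u*p - u*y)) * (1 + u*p)"
        using e0 p(2) by (rule mult_right_mono[OF _ less_imp_le])
      also have "exp (u*a - u*p) * (1 + (u*p - u*y)) * (1 + u*p) = 1 + (u*p - u*y)"
        using p(3) by (simp add: mult.commute mult.left_commute)
      finally have e1: "exp (u*a - u*y) * (1 + u*p) \<ge> (1 + (u*p - u*y))" .
      have e2: "exp (u*a - u*y) \<ge> (1 + (u*p - u*y)) / (1 + u*p)"
        using e1 p by (simp add: divide_le_eq)
      have "EXmn u a k l t = k * l * (1 - exp (- (u / l) * (t - a * l)))"
        unfolding EXmn_def by (rule if_P) (use True in simp)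
      also have "... = l * (1 - exp (u*a - u*y))" by (simp only: ex k1 mult_1)
      also have "... \<le> l * (1 - (1 + (u*p - u*y)) / (1 + u*p))"
        using e2 l0 by (intro mult_left_mono) auto
      also have "... = t * (u / (1 + u * p))" using p by (simp add: ty field_simps)
      finally show ?thesis using k1 t0 by (simp add: p_def)
    qed
  qed
qed

lemma EXmn_opt: fixes u a k t :: real
  assumes "u > 0" "a > 0" "k \<in> {0,1}" "t > 0"
  shows "EXmn u a k (t / phi u a) t = k * t * (u / (1 + u * phi u a))"
proof -
  define p where "p = phi u a"
  have p: "p > a" "1 + u * p > 0" "exp (u*a - u*p) * (1 + u*p) = 1"
    using phi_props[OF assms(1,2)] by (auto simp: p_def)
  have p0: "p > 0" using p assms by simp
  show ?thesis
  proof (cases "k = 0")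
    case True thus ?thesis by (simp add: EXmn_def)
  next
    case False
    hence k1: "k = 1" using assms by auto
    have "a * (t / p) = (a / p) * t" by simp
    also have "... \<le> 1 * t" using p p0 assms by (intro mult_right_mono) auto
    finally have c: "t \<ge> a * (t / p)" by simp
    have ex: "- (u / (t/p)) * (t - a * (t/p)) = u*a - u*p" using p0 assms by (simp add: field_simps)
    have E: "exp (u*a - u*p) = 1 / (1 + u*p)" using p by (simp add: field_simps)
    have "EXmn u a k (t / p) t = k * (t/p) * (1 - exp (- (u / (t/p)) * (t - a * (t/p))))"
      unfolding EXmn_def by (rule if_P) (use c k1 in simp)
    also have "... = (t/p) * (1 - 1 / (1 + u*p))" by (simp only: ex E k1 mult_1)
    also have "... = t * (u / (1 + u * p))" using p p0 by (simp add: field_simps)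
    finally show ?thesis using k1 by (simp add: p_def)
  qed
qed

lemma G_eq:
  assumes "L m > 0" "u m n > 0" "a m n > 0"
  shows "u m n / (1 + u m n * phi (u m n) (a m n)) = L m * vv L u a m n"
    "vv L u a m n > 0"
proof -
  have p: "1 + u m n * phi (u m n) (a m n) > 0" using phi_props[OF assms(2,3)] by simp
  show "u m n / (1 + u m n * phi (u m n) (a m n)) = L m * vv L u a m n"
    using assms p by (simp add: vv_def)
  show "vv L u a m n > 0" using assms p by (simp add: vv_def)
qed

lemma feas_bound:
  assumes M1: "1 \<le> M"
    and A3: "\<forall>m\<in>{1..M}. L m > 0"
    and A4: "\<forall>m\<in>{1..M}. \<forall>n\<in>{1..N}. u m n > 0"
    and A5: "\<forall>m\<in>{1..M}. \<forall>n\<in>{1..N}. a m n > 0"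
    and F: "P2_feasible M N L u a k l t"
  shows "t > 0" "P5_obj M N (vv L u a) k > 0" "1 / P5_obj M N (vv L u a) k \<le> t"
proof -
  define S where "S m = (\<Sum>n = 1..N. k m n * vv L u a m n)" for m
  have va: "valid_assign M N k" and l0: "\<forall>m\<in>{1..M}. \<forall>n\<in>{1..N}. l m n \<ge> 0"
    and cov: "\<forall>m\<in>{1..M}. L m \<le> EXm N u a k l m t"
    using F unfolding P2_feasible_def by auto
  have kv: "\<forall>m\<in>{1..M}. \<forall>n\<in>{1..N}. k m n \<in> {0,1}" using va unfolding valid_assign_def by auto
  have key: "L m \<le> max t 0 * L m * S m" if m: "m \<in> {1..M}" for m
  proof -
    have "L m \<le> EXm N u a k l m t" using cov m by auto
    also have "... = (\<Sum>n = 1..N. EXmn (u m n) (a m n) (k m n) (l m n) t)" by (simp add: EXm_def)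
    also have "... \<le> (\<Sum>n = 1..N. k m n * max t 0 * (L m * vv L u a m n))"
    proof (rule sum_mono)
      fix n assume n: "n \<in> {1..N}"
      have "EXmn (u m n) (a m n) (k m n) (l m n) t \<le> k m n * max t 0 * (u m n / (1 + u m n * phi (u m n) (a m n)))"
        using EXmn_bound[of "u m n" "a m n" "k m n" "l m n" t] A4 A5 kv l0 m n by auto
      also have "... = k m n * max t 0 * (L m * vv L u a m n)"
        using G_eq(1)[of L m u n a] A3 A4 A5 m n by auto
      finally show "EXmn (u m n) (a m n) (k m n) (l m n) t \<le> k m n * max t 0 * (L m * vv L u a m n)" .
    qed
    also have "... = max t 0 * L m * S m" unfolding S_def sum_distrib_left
      by (rule sum.cong) (auto simp: algebra_simps)
    finally show ?thesis .
  qed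
  have m1: "1 \<in> {1..M}" using M1 by simp
  show t0: "t > 0"
  proof (rule ccontr)
    assume "\<not> t > 0"
    hence mx: "max t 0 = 0" by simp
    have "L 1 > 0" using A3 m1 by blast
    moreover have "L 1 \<le> 0" using key[OF m1] mx by simp
    ultimately show False by linarith
  qed
  have Sg: "S m \<ge> 1 / t" if m: "m \<in> {1..M}" for m
  proof -
    have Lm: "L m > 0" using A3 m by auto
    have "L m * 1 \<le> L m * (t * S m)" using key[OF m] t0 by (simp add: algebra_simps)
    hence "1 \<le> t * S m" using Lm by (simp only: mult_le_cancel_left_pos)
    thus ?thesis using t0 by (simp add: divide_le_eq mult.commute)
  qed
  have Pdef: "P5_obj M N (vv L u a) k = Min (S ` {1..M})" by (simp add: P5_obj_def S_def)
  have Pg: "P5_obj M N (vv L u a) k \<ge> 1 / t" unfolding Pdef using Sg M1 by (subst Min_ge_iff) auto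
  show P0: "P5_obj M N (vv L u a) k > 0" using Pg t0
    by (meson less_le_trans zero_less_divide_1_iff)
  show "1 / P5_obj M N (vv L u a) k \<le> t"
    using Pg t0 P0 by (simp add: divide_le_eq mult.commute le_divide_eq)
qed

lemma feas_construct:
  assumes M1: "1 \<le> M"
    and A3: "\<forall>m\<in>{1..M}. L m > 0"
    and A4: "\<forall>m\<in>{1..M}. \<forall>n\<in>{1..N}. u m n > 0"
    and A5: "\<forall>m\<in>{1..M}. \<forall>n\<in>{1..N}. a m n > 0"
    and va: "valid_assign M N k" and P0: "P5_obj M N (vv L u a) k > 0"
  shows "P2_feasible M N L u a k (\<lambda>m n. (1 / P5_obj M N (vv L u a) k) / phi (u m n) (a m n))
           (1 / P5_obj M N (vv L u a) k)"
proof -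
  define P where "P = P5_obj M N (vv L u a) k"
  define t where "t = 1 / P"
  have t0: "t > 0" using P0 by (simp add: t_def P_def)
  define S where "S m = (\<Sum>n = 1..N. k m n * vv L u a m n)" for m
  have kv: "\<forall>m\<in>{1..M}. \<forall>n\<in>{1..N}. k m n \<in> {0,1}" using va unfolding valid_assign_def by auto
  have Pdef: "P = Min (S ` {1..M})" by (simp add: P5_obj_def S_def P_def)
  have SP: "P \<le> S m" if "m \<in> {1..M}" for m unfolding Pdef using that by (intro Min_le) auto
  have l0: "\<forall>m\<in>{1..M}. \<forall>n\<in>{1..N}. t / phi (u m n) (a m n) \<ge> 0"
  proof (intro ballI)
    fix m n assume "m \<in> {1..M}" "n \<in> {1..N}"
    hence "phi (u m n) (a m n) > 0" using phi_props(1)[of "u m n" "a m n"] A4 A5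
      by (meson less_trans)
    thus "t / phi (u m n) (a m n) \<ge> 0" using t0 by simp
  qed
  have cov: "L m - EXm N u a k (\<lambda>m n. t / phi (u m n) (a m n)) m t \<le> 0" if m: "m \<in> {1..M}" for m
  proof -
    have "EXm N u a k (\<lambda>m n. t / phi (u m n) (a m n)) m t
        = (\<Sum>n = 1..N. EXmn (u m n) (a m n) (k m n) (t / phi (u m n) (a m n)) t)" by (simp add: EXm_def)
    also have "... = (\<Sum>n = 1..N. k m n * t * (L m * vv L u a m n))"
    proof (rule sum.cong)
      fix n assume n: "n \<in> {1..N}"
      have "EXmn (u m n) (a m n) (k m n) (t / phi (u m n) (a m n)) t = k m n * t * (u m n / (1 + u m n * phi (u m n) (a m n)))"
        using EXmn_opt[of "u m n" "a m n" "k m n" t] A4 A5 kv t0 m n by auto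
      also have "... = k m n * t * (L m * vv L u a m n)"
        using G_eq(1)[of L m u n a] A3 A4 A5 m n by auto
      finally show "EXmn (u m n) (a m n) (k m n) (t / phi (u m n) (a m n)) t = k m n * t * (L m * vv L u a m n)" .
    qed simp
    also have "... = t * L m * S m" unfolding S_def sum_distrib_left
      by (rule sum.cong) (auto simp: algebra_simps)
    also have "... \<ge> t * L m * P"
    proof -
      have "L m > 0" using A3 m by blast
      hence "t * L m \<ge> 0" using t0 by simp
      thus ?thesis using SP[OF m] by (intro mult_left_mono)
    qed
    also have "t * L m * P = L m" using P0 by (simp add: t_def P_def)
    finally show ?thesis by simp
  qed
  show ?thesis unfolding P2_feasible_def using va l0 cov by (simp add: t_def P_def)
qed

lemma recip_le: fixes x y :: real assumes "0 < y" "y \<le> x" shows "1 / x \<le> 1 / y"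
  using assms by (intro divide_left_mono) auto

lemma exists_max:
  "\<exists>k0. valid_assign M N k0 \<and> (\<forall>k. valid_assign M N k \<longrightarrow> P5_obj M N v k \<le> P5_obj M N v k0)"
proof -
  define r where "r k = (\<lambda>m n. if m \<in> {1..M} \<and> n \<in> {1..N} then k m n else (0::real))" for k :: "nat \<Rightarrow> nat \<Rightarrow> real"
  define F1 where "F1 = {g :: nat \<Rightarrow> real. \<forall>n. (n \<in> {1..N} \<longrightarrow> g n \<in> {0,1}) \<and> (n \<notin> {1..N} \<longrightarrow> g n = 0)}"
  define R where "R = {f :: nat \<Rightarrow> nat \<Rightarrow> real. \<forall>m. (m \<in> {1..M} \<longrightarrow> f m \<in> F1) \<and> (m \<notin> {1..M} \<longrightarrow> f m = (\<lambda>n. 0))}"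
  have fF1: "finite F1" unfolding F1_def by (rule finite_set_of_finite_funs) auto
  have fR: "finite R" unfolding R_def by (rule finite_set_of_finite_funs) (auto simp: fF1)
  define V where "V = {k. valid_assign M N k}"
  have rR: "r k \<in> R" if "k \<in> V" for k
    using that unfolding V_def valid_assign_def R_def F1_def r_def by auto
  have Pr: "P5_obj M N v (r k) = P5_obj M N v k" for k
    unfolding P5_obj_def r_def by (intro arg_cong[where f=Min] image_cong refl sum.cong) auto
  have sub: "(P5_obj M N v) ` V \<subseteq> (P5_obj M N v) ` R"
  proof
    fix x assume "x \<in> (P5_obj M N v) ` V"
    then obtain k where k: "k \<in> V" "x = P5_obj M N v k" by auto
    hence "x = P5_obj M N v (r k)" using Pr by simp
    thus "x \<in> (P5_obj M N v) ` R" using rR[OF k(1)] by auto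
  qed
  have fin: "finite ((P5_obj M N v) ` V)" using finite_subset[OF sub] fR by auto
  have ne: "(\<lambda>m n. 0) \<in> V" unfolding V_def valid_assign_def by auto
  hence ne': "(P5_obj M N v) ` V \<noteq> {}" by auto
  have "Max ((P5_obj M N v) ` V) \<in> (P5_obj M N v) ` V" using fin ne' by (rule Max_in)
  then obtain k0 where k0: "k0 \<in> V" "P5_obj M N v k0 = Max ((P5_obj M N v) ` V)" by auto
  have "\<forall>k. valid_assign M N k \<longrightarrow> P5_obj M N v k \<le> P5_obj M N v k0"
    using k0 fin by (auto simp: V_def)
  thus ?thesis using k0 V_def by auto
qed

lemma exists_pos:
  assumes M1: "1 \<le> M" and NM: "N > M" and vpos: "\<forall>m\<in>{1..M}. \<forall>n\<in>{1..N}. v m n > (0::real)"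
  shows "\<exists>k. valid_assign M N k \<and> P5_obj M N v k > 0"
proof -
  define kd where "kd = (\<lambda>m n :: nat. if m = n then (1::real) else 0)"
  have va: "valid_assign M N kd" unfolding valid_assign_def kd_def by auto
  have S: "(\<Sum>n = 1..N. kd m n * v m n) = v m m" if "m \<in> {1..M}" for m
  proof -
    have "(\<Sum>n = 1..N. kd m n * v m n) = (\<Sum>n = 1..N. if m = n then v m n else 0)"
      by (rule sum.cong) (auto simp: kd_def)
    also have "... = v m m" using that NM by (simp add: sum.delta)
    finally show ?thesis .
  qed
  have "P5_obj M N v kd > 0" unfolding P5_obj_def
    using M1 NM vpos S by (subst Min_gr_iff) auto
  thus ?thesis using va by blast
qed

theorem proposition1:
  fixes M N :: nat and L :: "nat \<Rightarrow> real" and u a :: "nat \<Rightarrow> nat \<Rightarrow> real"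
  assumes "1 \<le> M" and "N > M"
    and "\<forall>m\<in>{1..M}. L m > 0"
    and "\<forall>m\<in>{1..M}. \<forall>n\<in>{1..N}. u m n > 0"
    and "\<forall>m\<in>{1..M}. \<forall>n\<in>{1..N}. a m n > 0"
  shows
    "(\<forall>k. valid_assign M N k \<and> P5_obj M N (vv L u a) k > 0 \<longrightarrow>
        (\<exists>l. P2_feasible M N L u a k l (1 / P5_obj M N (vv L u a) k)) \<and>
        (\<forall>l t. P2_feasible M N L u a k l t \<longrightarrow> 1 / P5_obj M N (vv L u a) k \<le> t))
   \<and> (\<forall>k. valid_assign M N k \<and> \<not> P5_obj M N (vv L u a) k > 0 \<longrightarrow>
        \<not> (\<exists>l t. P2_feasible M N L u a k l t))
   \<and> (\<forall>k. (\<exists>l t. P2_optimal M N L u a k l t) \<longleftrightarrow> P5_optimal M N (vv L u a) k)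
   \<and> (\<exists>k l t. P2_optimal M N L u a k l t)
   \<and> (\<forall>k l t k'. P2_optimal M N L u a k l t \<and> P5_optimal M N (vv L u a) k' \<longrightarrow>
        t = 1 / P5_obj M N (vv L u a) k')"
proof -
  note M1 = assms(1) and A3 = assms(3) and A4 = assms(4) and A5 = assms(5)
  define P where "P k = P5_obj M N (vv L u a) k" for k
  have vpos: "\<forall>m\<in>{1..M}. \<forall>n\<in>{1..N}. vv L u a m n > 0"
    using G_eq(2) A3 A4 A5 by blast
  obtain kd where kd: "valid_assign M N kd" "P kd > 0"
    using exists_pos[OF M1 assms(2) vpos] P_def by auto
  obtain k0 where k0: "valid_assign M N k0" "\<And>k. valid_assign M N k \<Longrightarrow> P k \<le> P k0"
    using exists_max[of M N "vv L u a"] P_def by auto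
  have Pk0: "P k0 > 0" using kd k0(2)[OF kd(1)] by linarith
  have FB: "t > 0 \<and> P k > 0 \<and> 1 / P k \<le> t \<and> valid_assign M N k" if "P2_feasible M N L u a k l t" for k l t
    using feas_bound[OF M1 A3 A4 A5 that] that by (auto simp: P_def P2_feasible_def)
  have FC: "\<exists>l. P2_feasible M N L u a k l (1 / P k)" if "valid_assign M N k" "P k > 0" for k
    using feas_construct[OF M1 A3 A4 A5 that[unfolded P_def]] by (auto simp: P_def)
  have optA: "t = 1 / P k0 \<and> P5_optimal M N (vv L u a) k" if o: "P2_optimal M N L u a k l t" for k l t
  proof -
    have f: "P2_feasible M N L u a k l t" using o by (simp add: P2_optimal_def)
    have fb: "t > 0" "P k > 0" "1 / P k \<le> t" "valid_assign M N k" using FB[OF f] by auto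
    obtain l0 where l0: "P2_feasible M N L u a k0 l0 (1 / P k0)" using FC[OF k0(1) Pk0] by blast
    have "t \<le> 1 / P k0" using o l0 by (auto simp: P2_optimal_def)
    moreover have "1 / P k0 \<le> 1 / P k" using recip_le[OF fb(2) k0(2)[OF fb(4)]] .
    ultimately have eq: "t = 1 / P k0" "1 / P k0 = 1 / P k" using fb(3) by linarith+
    have "inverse (P k0) = inverse (P k)" using eq(2) by (simp add: inverse_eq_divide)
    hence "P k = P k0" by simp
    hence "P5_optimal M N (vv L u a) k" using fb(4) k0(2) by (auto simp: P5_optimal_def P_def)
    thus ?thesis using eq by simp
  qed
  have optB: "\<exists>l. P2_optimal M N L u a k l (1 / P k)" if o: "P5_optimal M N (vv L u a) k" for k
  proof -
    have va: "valid_assign M N k" and mx: "\<And>k'. valid_assign M N k' \<Longrightarrow> P k' \<le> P k"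
      using o by (auto simp: P5_optimal_def P_def)
    have Pk: "P k > 0" using mx[OF kd(1)] kd(2) by linarith
    obtain l where l: "P2_feasible M N L u a k l (1 / P k)" using FC[OF va Pk] by blast
    have "1 / P k \<le> t'" if "P2_feasible M N L u a k' l' t'" for k' l' t'
    proof -
      have fb: "P k' > 0" "1 / P k' \<le> t'" "valid_assign M N k'" using FB[OF that] by auto
      have "1 / P k \<le> 1 / P k'" using recip_le[OF fb(1) mx[OF fb(3)]] .
      thus ?thesis using fb(2) by linarith
    qed
    thus ?thesis using l by (auto simp: P2_optimal_def)
  qed
  have o0: "P5_optimal M N (vv L u a) k0" using k0 by (auto simp: P5_optimal_def P_def)
  have c1: "\<forall>k. valid_assign M N k \<and> P5_obj M N (vv L u a) k > 0 \<longrightarrow>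
        (\<exists>l. P2_feasible M N L u a k l (1 / P5_obj M N (vv L u a) k)) \<and>
        (\<forall>l t. P2_feasible M N L u a k l t \<longrightarrow> 1 / P5_obj M N (vv L u a) k \<le> t)"
  proof (intro allI impI)
    fix k assume h: "valid_assign M N k \<and> P5_obj M N (vv L u a) k > 0"
    have "\<exists>l. P2_feasible M N L u a k l (1 / P5_obj M N (vv L u a) k)"
      using FC[of k] h by (auto simp: P_def)
    moreover have "\<forall>l t. P2_feasible M N L u a k l t \<longrightarrow> 1 / P5_obj M N (vv L u a) k \<le> t"
      using FB by (auto simp: P_def)
    ultimately show "(\<exists>l. P2_feasible M N L u a k l (1 / P5_obj M N (vv L u a) k)) \<and>
        (\<forall>l t. P2_feasible M N L u a k l t \<longrightarrow> 1 / P5_obj M N (vv L u a) k \<le> t)" by blast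
  qed
  have c2: "\<forall>k. valid_assign M N k \<and> \<not> P5_obj M N (vv L u a) k > 0 \<longrightarrow>
        \<not> (\<exists>l t. P2_feasible M N L u a k l t)"
    using FB by (auto simp: P_def)
  have c3: "\<forall>k. (\<exists>l t. P2_optimal M N L u a k l t) \<longleftrightarrow> P5_optimal M N (vv L u a) k"
    using optA optB by blast
  have c4: "\<exists>k l t. P2_optimal M N L u a k l t" using optB[OF o0] by blast
  have c5: "\<forall>k l t k'. P2_optimal M N L u a k l t \<and> P5_optimal M N (vv L u a) k' \<longrightarrow>
        t = 1 / P5_obj M N (vv L u a) k'"
  proof (intro allI impI)
    fix k l t k' assume h: "P2_optimal M N L u a k l t \<and> P5_optimal M N (vv L u a) k'"
    have t: "t = 1 / P k0" using optA h by blast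
    have "P k' \<le> P k0" using h k0(2) by (auto simp: P5_optimal_def)
    moreover have "P k0 \<le> P k'" using h k0(1) by (auto simp: P5_optimal_def P_def)
    ultimately have "P k' = P k0" by linarith
    thus "t = 1 / P5_obj M N (vv L u a) k'" using t by (simp add: P_def)
  qed
  show ?thesis using c1 c2 c3 c4 c5 by blast
qed

end
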